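(* Let $f$ be a convergent power series in $\mathbf z=(z_1,\dots,z_n)$ with $f(\mathbf 0)=0$. Let $P=(p_1,\dots,p_n)$ be a vertex of the dual Newton diagram $\Gamma^*(f)$ which is not strictly positive, and put $I(P)=\{i:p_i=0\}$. If $\mathbb C^{I(P)}$ is not a vanishing coordinate subspace of $f$, then $P$ is (up to the positive scaling with which vertices are defined) one of the standard basis vectors $e_1,\dots,e_n$.
   Context: Newton diagram $\Gamma_+(f)$: convex hull of $\bigcup_{c_\nu\ne0}(\nu+\mathbb R_{\ge0}^n)$ for $f=\sum c_\nu\mathbf z^\nu$. For a weight vector $P\in\mathbb R_{\ge0}^n$, $\Delta(P,f)$ is the face of $\Gamma_+(f)$ on which $\nu\mapsto\sum p_i\nu_i$ attains its minimum. $P\sim Q$ iff $\Delta(P,f)=\Delta(Q,f)$; the classes form a cone subdivision $\Gamma^*(f)$ of $\mathbb R_{\ge0}^n$, and a vertex is a non-zero weight vector spanning a one-dimensional cone of this subdivision. $P$ is strictly positive if all $p_i>0$. For $I\subset\{1,\dots,n\}$, $\mathbb C^I=\{\mathbf z: z_j=0 \text{ for } j\notin I\}$ and $f^I=f|_{\mathbb C^I}$; $\mathbb C^I$ is a vanishing coordinate subspace if $f^I\equiv0$. *)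

theory Defs
  imports "HOL-Analysis.Analysis"
begin

text \<open>A (formal) power series in the variables z_i, i :: 'n (a finite index type, so
  n = CARD('n)), is given by its coefficient function
  c :: ('n \<Rightarrow> nat) \<Rightarrow> complex, the exponent vector \<nu> being a function 'n \<Rightarrow> nat.\<close>

definition conv_power_series :: "(('n::finite \<Rightarrow> nat) \<Rightarrow> complex) \<Rightarrow> bool" where
  "conv_power_series c \<longleftrightarrow>
     (\<exists>r>0. (\<lambda>\<nu>. norm (c \<nu>) * r ^ (\<Sum>i\<in>UNIV. \<nu> i)) summable_on UNIV)"

definition exp_vec :: "('n::finite \<Rightarrow> nat) \<Rightarrow> real^'n" where
  "exp_vec \<nu> = (\<chi> i. real (\<nu> i))"

definition nonneg_orthant :: "(real^'n) set" where
  "nonneg_orthant = {x. \<forall>i. 0 \<le> x $ i}"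

definition newton_diagram :: "(('n::finite \<Rightarrow> nat) \<Rightarrow> complex) \<Rightarrow> (real^'n) set" where
  "newton_diagram c =
     convex hull (\<Union>\<nu>\<in>{\<nu>. c \<nu> \<noteq> 0}. (\<lambda>x. exp_vec \<nu> + x) ` nonneg_orthant)"

definition newton_face :: "real^'n \<Rightarrow> (('n::finite \<Rightarrow> nat) \<Rightarrow> complex) \<Rightarrow> (real^'n) set" where
  "newton_face P c =
     {x \<in> newton_diagram c. \<forall>y \<in> newton_diagram c. P \<bullet> x \<le> P \<bullet> y}"

definition weight_class :: "(('n::finite \<Rightarrow> nat) \<Rightarrow> complex) \<Rightarrow> real^'n \<Rightarrow> (real^'n) set" where
  "weight_class c P = {Q \<in> nonneg_orthant. newton_face Q c = newton_face P c}"

text \<open>P is a vertex of \<Gamma>^*(f): a nonzero weight vector whose cone of the subdivision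
  (its equivalence class, a relatively open cone) is one-dimensional, i.e. is the open
  ray spanned by P.\<close>
definition dual_vertex :: "(('n::finite \<Rightarrow> nat) \<Rightarrow> complex) \<Rightarrow> real^'n \<Rightarrow> bool" where
  "dual_vertex c P \<longleftrightarrow> P \<in> nonneg_orthant \<and> P \<noteq> 0 \<and>
     weight_class c P = {t *\<^sub>R P | t. t > 0}"

definition strictly_positive :: "real^'n \<Rightarrow> bool" where
  "strictly_positive P \<longleftrightarrow> (\<forall>i. P $ i > 0)"

definition zero_index_set :: "real^'n \<Rightarrow> 'n set" where
  "zero_index_set P = {i. P $ i = 0}"

text \<open>C^I is a vanishing coordinate subspace iff f restricted to C^I is identically 0,
  i.e. every monomial supported in I has zero coefficient.\<close>
definition vanishing_coord_subspace :: "(('n::finite \<Rightarrow> nat) \<Rightarrow> complex) \<Rightarrow> 'n set \<Rightarrow> bool" where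
  "vanishing_coord_subspace c I \<longleftrightarrow> (\<forall>\<nu>. (\<forall>j. j \<notin> I \<longrightarrow> \<nu> j = 0) \<longrightarrow> c \<nu> = 0)"

end

theory Submission
  imports Defs
begin

lemma orth_convex: "convex (nonneg_orthant :: (real^'n) set)"
  unfolding convex_def nonneg_orthant_def by (auto intro!: add_nonneg_nonneg mult_nonneg_nonneg)

lemma diag_sub: "newton_diagram c \<subseteq> nonneg_orthant"
  unfolding newton_diagram_def
proof (rule hull_minimal)
  show "convex nonneg_orthant" by (rule orth_convex)
  show "(\<Union>\<nu>\<in>{\<nu>. c \<nu> \<noteq> 0}. (\<lambda>x. exp_vec \<nu> + x) ` nonneg_orthant) \<subseteq> nonneg_orthant"
    by (auto simp: nonneg_orthant_def exp_vec_def)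
qed

lemma exp_in: "c \<nu> \<noteq> 0 \<Longrightarrow> exp_vec \<nu> \<in> newton_diagram c"
  unfolding newton_diagram_def
  apply (rule hull_inc)
  apply (rule UN_I[of \<nu>], simp)
  apply (rule image_eqI[of _ _ 0]) apply simp
  by (simp add: nonneg_orthant_def)

lemma inner_zero_iff:
  fixes Q x :: "real^'n"
  assumes "Q \<in> nonneg_orthant" "x \<in> nonneg_orthant"
  shows "Q \<bullet> x = 0 \<longleftrightarrow> (\<forall>j. Q$j \<noteq> 0 \<longrightarrow> x$j = 0)"
proof -
  have nn: "\<And>i. i\<in>UNIV \<Longrightarrow> 0 \<le> Q$i * x$i" using assms by (auto simp: nonneg_orthant_def)
  have "Q \<bullet> x = (\<Sum>i\<in>UNIV. Q$i * x$i)" by (simp add: inner_vec_def)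
  then show ?thesis using sum_nonneg_eq_0_iff[of UNIV "\<lambda>i. Q$i * x$i", OF _ nn] by auto
qed

lemma inner_nonneg':
  fixes Q x :: "real^'n"
  assumes "Q \<in> nonneg_orthant" "x \<in> nonneg_orthant"
  shows "0 \<le> Q \<bullet> x"
  using assms by (auto simp: inner_vec_def nonneg_orthant_def intro!: sum_nonneg)

lemma face_char:
  fixes Q :: "real^'n"
  assumes Q: "Q \<in> nonneg_orthant" and cnu: "c \<nu> \<noteq> 0"
    and sup: "\<forall>j. Q$j \<noteq> 0 \<longrightarrow> \<nu> j = 0"
  shows "newton_face Q c = {x \<in> newton_diagram c. \<forall>j. Q$j \<noteq> 0 \<longrightarrow> x$j = 0}"
proof -
  have e: "exp_vec \<nu> \<in> newton_diagram c" using cnu by (rule exp_in)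
  have eo: "exp_vec \<nu> \<in> nonneg_orthant" using e diag_sub by blast
  have q0: "Q \<bullet> exp_vec \<nu> = 0" using inner_zero_iff[OF Q eo] sup by (simp add: exp_vec_def)
  have "newton_face Q c = {x \<in> newton_diagram c. Q \<bullet> x = 0}"
  proof (rule set_eqI, rule iffI)
    fix x assume "x \<in> newton_face Q c"
    then have x: "x \<in> newton_diagram c" and le: "Q \<bullet> x \<le> Q \<bullet> exp_vec \<nu>"
      using e unfolding newton_face_def by auto
    have "0 \<le> Q \<bullet> x" using inner_nonneg'[OF Q] x diag_sub by blast
    then show "x \<in> {x \<in> newton_diagram c. Q \<bullet> x = 0}" using x le q0 by auto
  next
    fix x assume "x \<in> {x \<in> newton_diagram c. Q \<bullet> x = 0}"
    then show "x \<in> newton_face Q c" unfolding newton_face_def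
      using inner_nonneg'[OF Q] diag_sub by fastforce
  qed
  also have "\<dots> = {x \<in> newton_diagram c. \<forall>j. Q$j \<noteq> 0 \<longrightarrow> x$j = 0}"
    using inner_zero_iff[OF Q] diag_sub by blast
  finally show ?thesis .
qed

theorem proposition8:
  fixes c :: "('n::finite \<Rightarrow> nat) \<Rightarrow> complex" and P :: "real^'n"
  assumes "conv_power_series c"
    and "c (\<lambda>_. 0) = 0"
    and "dual_vertex c P"
    and "\<not> strictly_positive P"
    and "\<not> vanishing_coord_subspace c (zero_index_set P)"
  shows "\<exists>i. \<exists>t>0. P = t *\<^sub>R axis i 1"
proof -
  obtain \<nu> where cnu: "c \<nu> \<noteq> 0" and sup: "\<forall>j. P$j \<noteq> 0 \<longrightarrow> \<nu> j = 0"
    using assms(5) unfolding vanishing_coord_subspace_def zero_index_set_def by auto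
  have Po: "P \<in> nonneg_orthant" and Pn: "P \<noteq> 0" and wc: "weight_class c P = {t *\<^sub>R P | t. t > 0}"
    using assms(3) unfolding dual_vertex_def by auto
  obtain j0 where j0: "P$j0 \<noteq> 0" using Pn by (metis vec_eq_iff zero_index)
  have "0 \<le> P$j0" using Po by (simp add: nonneg_orthant_def)
  then have pos: "P$j0 > 0" using j0 by linarith
  have others: "P$j = 0" if "j \<noteq> j0" for j
  proof (rule ccontr)
    assume j1: "P$j \<noteq> 0"
    define Q :: "real^'n" where "Q = (\<chi> i. if i = j0 then 2 * P$i else P$i)"
    have Qo: "Q \<in> nonneg_orthant" using Po by (auto simp: Q_def nonneg_orthant_def)
    have supp: "\<forall>i. (Q$i \<noteq> 0) = (P$i \<noteq> 0)" by (simp add: Q_def)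
    have sQ: "\<forall>j. Q$j \<noteq> 0 \<longrightarrow> \<nu> j = 0" using sup supp by blast
    have "newton_face Q c = newton_face P c"
      unfolding face_char[of Q c \<nu>, OF Qo cnu sQ] face_char[of P c \<nu>, OF Po cnu sup]
      using supp by presburger
    then have "Q \<in> weight_class c P" using Qo by (simp add: weight_class_def)
    then obtain t where t: "Q = t *\<^sub>R P" using wc by auto
    have "Q$j0 = t * P$j0" "Q$j = t * P$j" using t by simp_all
    moreover have "Q$j0 = 2 * P$j0" "Q$j = P$j" using that by (simp_all add: Q_def)
    ultimately have "2 * P$j0 = t * P$j0" "P$j = t * P$j" by simp_all
    then have "t = 2" using j0 by simp
 moreover have "t = 1" using `P$j = t * P$j` using j1 by simp
    ultimately show False by simp
  qed
  have "P = (P$j0) *\<^sub>R axis j0 1"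
    by (auto simp: vec_eq_iff axis_def others)
  then show ?thesis using pos by blast
qed

end
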